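(* Let $N\geq 2$, $k\geq 1$ be integers, $s\in\left(-\frac{1}{N-1},1\right)$, and let $\Gamma(N,k)$ be the $N^k\times N^k$ matrix with rows and columns indexed by functions $\sigma,\tau:\{1,\dots,k\}\to\{1,\dots,N\}$ and entries $\Gamma(N,k)_{\sigma\tau}=s^{|\{t:\sigma(t)\neq\tau(t)\}|}$ (this is the Gram matrix of the states $|\psi_{\sigma(1)}\rangle\otimes\cdots\otimes|\psi_{\sigma(k)}\rangle$ where $|\psi_1\rangle,\dots,|\psi_N\rangle$ are unit vectors with pairwise inner products $s$). Let $I$ be the $N^k\times N^k$ identity matrix and $$P(N,k)=\begin{cases}(1-s)^k I, & s\in[0,1),\\ \left[1+(N-1)s\right]^k I, & s\in\left(-\frac{1}{N-1},0\right].\end{cases}$$ Then $\Gamma(N,k)-P(N,k)$ is positive semidefinite. *)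

theory Defs
  imports Complex_Main "HOL-Library.FuncSet"
begin

definition idx :: "nat \<Rightarrow> nat \<Rightarrow> (nat \<Rightarrow> nat) set" where
  "idx N k = ({1..k} \<rightarrow>\<^sub>E {1..N})"

definition Gamma :: "nat \<Rightarrow> nat \<Rightarrow> real \<Rightarrow> (nat \<Rightarrow> nat) \<Rightarrow> (nat \<Rightarrow> nat) \<Rightarrow> real" where
  "Gamma N k s \<sigma> \<tau> = s ^ card {t \<in> {1..k}. \<sigma> t \<noteq> \<tau> t}"

definition Pcoef :: "nat \<Rightarrow> nat \<Rightarrow> real \<Rightarrow> real" where
  "Pcoef N k s = (if 0 \<le> s then (1 - s) ^ k else (1 + (real N - 1) * s) ^ k)"

definition Pmat :: "nat \<Rightarrow> nat \<Rightarrow> real \<Rightarrow> (nat \<Rightarrow> nat) \<Rightarrow> (nat \<Rightarrow> nat) \<Rightarrow> real" where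
  "Pmat N k s \<sigma> \<tau> = (if \<sigma> = \<tau> then Pcoef N k s else 0)"

definition psd_on :: "'i set \<Rightarrow> ('i \<Rightarrow> 'i \<Rightarrow> real) \<Rightarrow> bool" where
  "psd_on S M \<longleftrightarrow> (\<forall>i\<in>S. \<forall>j\<in>S. M i j = M j i) \<and>
     (\<forall>x :: 'i \<Rightarrow> real. 0 \<le> (\<Sum>i\<in>S. \<Sum>j\<in>S. x i * M i j * x j))"

end

theory Submission
  imports Defs
begin

definition hdist :: "'p set \<Rightarrow> ('p \<Rightarrow> 'v) \<Rightarrow> ('p \<Rightarrow> 'v) \<Rightarrow> nat" where
  "hdist T g h = card {t \<in> T. g t \<noteq> h t}"

definition Bil :: "'p set \<Rightarrow> 'v set \<Rightarrow> real \<Rightarrow> (('p \<Rightarrow> 'v) \<Rightarrow> real) \<Rightarrow> (('p \<Rightarrow> 'v) \<Rightarrow> real) \<Rightarrow> real" where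
  "Bil T A s y z = (\<Sum>g\<in>PiE T (\<lambda>_. A). \<Sum>h\<in>PiE T (\<lambda>_. A). y g * s ^ hdist T g h * z h)"

lemma hdist_sym: "hdist T g h = hdist T h g"
  unfolding hdist_def by metis

lemma Bil_sym: "Bil T A s y z = Bil T A s z y"
  unfolding Bil_def
  by (subst sum.swap) (simp add: hdist_sym mult.commute mult.left_commute)

lemma Bil_sum_left: "Bil T A s (\<lambda>g. \<Sum>a\<in>B. y a g) z = (\<Sum>a\<in>B. Bil T A s (y a) z)"
  unfolding Bil_def
  by (simp add: sum_distrib_right sum.swap[of _ B])

lemma Bil_sum_right: "Bil T A s z (\<lambda>g. \<Sum>a\<in>B. y a g) = (\<Sum>a\<in>B. Bil T A s z (y a))"
  by (simp add: Bil_sym[of T A s z] Bil_sum_left)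

lemma Bil_diff_left: "Bil T A s (\<lambda>g. y g - w g) z = Bil T A s y z - Bil T A s w z"
  unfolding Bil_def
  by (simp add: left_diff_distrib sum_subtractf)

lemma Bil_diff_right: "Bil T A s z (\<lambda>g. y g - w g) = Bil T A s z y - Bil T A s z w"
  by (simp add: Bil_sym[of T A s z] Bil_diff_left)

lemma sum_PiE_insert:
  fixes F :: "('p \<Rightarrow> 'v) \<Rightarrow> real"
  assumes "t \<notin> T"
  shows "(\<Sum>\<sigma>\<in>PiE (insert t T) (\<lambda>_. A). F \<sigma>) = (\<Sum>a\<in>A. \<Sum>g\<in>PiE T (\<lambda>_. A). F (g(t:=a)))"
proof -
  have "(\<Sum>\<sigma>\<in>PiE (insert t T) (\<lambda>_. A). F \<sigma>) = (\<Sum>p\<in>A \<times> PiE T (\<lambda>_. A). F ((\<lambda>(y, g). g(t := y)) p))"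
    unfolding PiE_insert_eq
    by (subst sum.reindex) (use inj_combinator[OF assms, of "\<lambda>_. A"] in auto)
  also have "\<dots> = (\<Sum>a\<in>A. \<Sum>g\<in>PiE T (\<lambda>_. A). F (g(t:=a)))"
    by (simp add: sum.cartesian_product split_def)
  finally show ?thesis .
qed

lemma hdist_insert:
  assumes "t \<notin> T" "finite T"
  shows "hdist (insert t T) (g(t:=a)) (h(t:=b)) = hdist T g h + (if a = b then 0 else 1)"
proof -
  have e: "{u \<in> insert t T. (g(t:=a)) u \<noteq> (h(t:=b)) u} =
     (if a = b then {} else {t}) \<union> {u \<in> T. g u \<noteq> h u}"
    using assms by auto
  show ?thesis unfolding hdist_def e using assms by auto
qed

lemma step:
  fixes y :: "'w \<Rightarrow> ('p \<Rightarrow> 'v) \<Rightarrow> real"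
  assumes psd: "\<And>z. Bil T A s z z \<ge> 0" and fin: "finite B" and cB: "card B = N"
    and c: "(s \<ge> 0 \<and> c = 1 - s) \<or> (s < 0 \<and> c = 1 + (real N - 1) * s)"
  shows "(\<Sum>a\<in>B. \<Sum>b\<in>B. (if a = b then 1 else s) * Bil T A s (y a) (y b))
           \<ge> c * (\<Sum>a\<in>B. Bil T A s (y a) (y a))"
proof -
  define S where "S = (\<Sum>a\<in>B. \<Sum>b\<in>B. Bil T A s (y a) (y b))"
  define D where "D = (\<Sum>a\<in>B. Bil T A s (y a) (y a))"
  have L: "(\<Sum>a\<in>B. \<Sum>b\<in>B. (if a = b then 1 else s) * Bil T A s (y a) (y b)) = s * S + (1 - s) * D"
  proof -
    have "(\<Sum>a\<in>B. \<Sum>b\<in>B. (if a = b then 1 else s) * Bil T A s (y a) (y b))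
        = (\<Sum>a\<in>B. \<Sum>b\<in>B. s * Bil T A s (y a) (y b) + (if a = b then (1 - s) * Bil T A s (y a) (y b) else 0))"
      by (intro sum.cong refl) (auto simp: algebra_simps)
    also have "\<dots> = s * S + (1 - s) * D"
      using fin by (simp add: sum.distrib S_def D_def sum_distrib_left)
    finally show ?thesis .
  qed
  have S0: "S \<ge> 0"
  proof -
    have "S = Bil T A s (\<lambda>g. \<Sum>a\<in>B. y a g) (\<lambda>g. \<Sum>b\<in>B. y b g)"
      by (simp add: S_def Bil_sum_left Bil_sum_right)
    then show ?thesis using psd by simp
  qed
  have ND: "real N * D - S \<ge> 0"
  proof -
    have "0 \<le> (\<Sum>a\<in>B. \<Sum>b\<in>B. Bil T A s (\<lambda>g. y a g - y b g) (\<lambda>g. y a g - y b g))"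
      by (intro sum_nonneg) (rule psd)
    also have "\<dots> = (\<Sum>a\<in>B. \<Sum>b\<in>B. Bil T A s (y a) (y a) + Bil T A s (y b) (y b)
                     - Bil T A s (y a) (y b) - Bil T A s (y b) (y a))"
      by (simp add: Bil_diff_left Bil_diff_right algebra_simps)
    also have "\<dots> = (\<Sum>a\<in>B. \<Sum>b\<in>B. Bil T A s (y a) (y a)) + (\<Sum>a\<in>B. \<Sum>b\<in>B. Bil T A s (y b) (y b))
        - (\<Sum>a\<in>B. \<Sum>b\<in>B. Bil T A s (y a) (y b)) - (\<Sum>a\<in>B. \<Sum>b\<in>B. Bil T A s (y b) (y a))"
      by (simp only: sum_subtractf sum.distrib)
    also have "(\<Sum>a\<in>B. \<Sum>b\<in>B. Bil T A s (y b) (y a)) = S"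
      unfolding S_def by (rule sum.swap)
    also have "(\<Sum>a\<in>B. \<Sum>b\<in>B. Bil T A s (y a) (y b)) = S"
      unfolding S_def ..
    also have "(\<Sum>a\<in>B. \<Sum>b\<in>B. Bil T A s (y b) (y b)) = real N * D"
      using cB by (simp add: D_def)
    also have "(\<Sum>a\<in>B. \<Sum>b\<in>B. Bil T A s (y a) (y a)) = real N * D"
      using cB by (simp add: D_def sum_distrib_left)
    also have "real N * D + real N * D - S - S = 2 * (real N * D - S)" by simp
    finally show ?thesis by simp
  qed
  show ?thesis
    unfolding L D_def[symmetric]
  proof (cases "s \<ge> 0")
    case True
    then have "c = 1 - s" using c by auto
    then show "c * D \<le> s * S + (1 - s) * D" using True S0 by simp
  next
    case False
    then have cc: "c = 1 + (real N - 1) * s" using c by auto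
    have "s * S \<ge> s * (real N * D)" using False ND
      by (intro mult_left_mono_neg) auto
    then show "c * D \<le> s * S + (1 - s) * D" unfolding cc by (simp add: algebra_simps)
  qed
qed

lemma pow_if: "(x::real) ^ (if P then 0 else 1) = (if P then 1 else x)"
  by simp

lemma main:
  assumes "finite T" and fin: "finite B" and cB: "card B = N"
    and c: "(s \<ge> 0 \<and> c = 1 - s) \<or> (s < 0 \<and> c = 1 + (real N - 1) * s)"
    and c0: "c \<ge> 0"
  shows "\<forall>y. Bil T B s y y \<ge> c ^ card T * (\<Sum>g\<in>PiE T (\<lambda>_. B). (y g)^2)"
  using assms(1)
proof (induction T rule: finite_induct)
  case empty
  show ?case by (simp add: Bil_def hdist_def power2_eq_square)
next
  case (insert t T)
  show ?case
  proof
    fix y :: "('a \<Rightarrow> 'b) \<Rightarrow> real"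
    define z where "z = (\<lambda>a g. y (g(t:=a)))"
    have psd: "\<And>w. Bil T B s w w \<ge> 0"
    proof -
      fix w
      have "0 \<le> c ^ card T * (\<Sum>g\<in>PiE T (\<lambda>_. B). (w g)^2)"
        using c0 by (intro mult_nonneg_nonneg sum_nonneg) auto
      also have "\<dots> \<le> Bil T B s w w" using insert.IH by blast
      finally show "Bil T B s w w \<ge> 0" .
    qed
    have "Bil (insert t T) B s y y =
      (\<Sum>a\<in>B. \<Sum>g\<in>PiE T (\<lambda>_. B). \<Sum>b\<in>B. \<Sum>h\<in>PiE T (\<lambda>_. B).
         z a g * (s ^ hdist T g h * (if a = b then 1 else s)) * z b h)"
      unfolding Bil_def z_def
      by (simp add: sum_PiE_insert[OF insert.hyps(2)] hdist_insert[OF insert.hyps(2,1)] power_add pow_if)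
    also have "\<dots> = (\<Sum>a\<in>B. \<Sum>b\<in>B. (if a = b then 1 else s) * Bil T B s (z a) (z b))"
      unfolding Bil_def
      by (rule sum.cong[OF refl], subst sum.swap, rule sum.cong[OF refl], simp add: sum_distrib_left mult_ac)
    finally have e: "Bil (insert t T) B s y y = (\<Sum>a\<in>B. \<Sum>b\<in>B. (if a = b then 1 else s) * Bil T B s (z a) (z b))" .
    have "c ^ card (insert t T) * (\<Sum>g\<in>PiE (insert t T) (\<lambda>_. B). (y g)^2)
        = c * (\<Sum>a\<in>B. c ^ card T * (\<Sum>g\<in>PiE T (\<lambda>_. B). (z a g)^2))"
      using insert.hyps
      by (simp add: sum_PiE_insert z_def sum_distrib_left mult.assoc)
    also have "\<dots> \<le> c * (\<Sum>a\<in>B. Bil T B s (z a) (z a))"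
      using c0 insert.IH by (intro mult_left_mono sum_mono) auto
    also have "\<dots> \<le> Bil (insert t T) B s y y"
      unfolding e by (rule step[OF psd fin cB c])
    finally show "c ^ card (insert t T) * (\<Sum>g\<in>PiE (insert t T) (\<lambda>_. B). (y g)^2) \<le> Bil (insert t T) B s y y" .
  qed
qed

theorem theorem3:
  fixes N k :: nat and s :: real
  assumes "N \<ge> 2" and "k \<ge> 1"
    and "- 1 / (real N - 1) < s" and "s < 1"
  shows "psd_on (idx N k) (\<lambda>\<sigma> \<tau>. Gamma N k s \<sigma> \<tau> - Pmat N k s \<sigma> \<tau>)"
proof -
  define c where "c = (if 0 \<le> s then 1 - s else 1 + (real N - 1) * s)"
  have N1: "real N - 1 > 0" using assms(1) by simp
  have "-1 < (real N - 1) * s"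
    using assms(3) N1 by (simp add: field_simps)
  then have c0: "c \<ge> 0" using assms(4) by (simp add: c_def)
  have cc: "(s \<ge> 0 \<and> c = 1 - s) \<or> (s < 0 \<and> c = 1 + (real N - 1) * s)"
    by (auto simp: c_def)
  have P: "Pcoef N k s = c ^ k" by (simp add: Pcoef_def c_def)
  have I: "idx N k = PiE {1..k} (\<lambda>_. {1..N})" by (simp add: idx_def)
  have G: "\<And>\<sigma> \<tau>. Gamma N k s \<sigma> \<tau> = s ^ hdist {1..k} \<sigma> \<tau>"
    by (simp add: Gamma_def hdist_def)
  have M: "\<forall>y. Bil {1..k} {1..N} s y y \<ge> c ^ card {1..k} * (\<Sum>g\<in>PiE {1..k} (\<lambda>_. {1..N}). (y g)^2)"
    by (rule main[OF _ _ _ cc c0]) auto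
  show ?thesis
    unfolding psd_on_def
  proof (intro conjI ballI allI)
    fix \<sigma> \<tau> show "Gamma N k s \<sigma> \<tau> - Pmat N k s \<sigma> \<tau> = Gamma N k s \<tau> \<sigma> - Pmat N k s \<tau> \<sigma>"
      unfolding G Pmat_def by (metis hdist_sym)
  next
    fix x :: "(nat \<Rightarrow> nat) \<Rightarrow> real"
    let ?S = "PiE {1..k} (\<lambda>_. {1..N})"
    have fin: "finite ?S" by (simp add: finite_PiE)
    have "(\<Sum>i\<in>?S. \<Sum>j\<in>?S. x i * (Gamma N k s i j - Pmat N k s i j) * x j)
       = (\<Sum>i\<in>?S. \<Sum>j\<in>?S. x i * Gamma N k s i j * x j) - (\<Sum>i\<in>?S. \<Sum>j\<in>?S. x i * Pmat N k s i j * x j)"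
      by (simp add: sum_subtractf right_diff_distrib left_diff_distrib)
    also have "(\<Sum>i\<in>?S. \<Sum>j\<in>?S. x i * Pmat N k s i j * x j) = (\<Sum>i\<in>?S. c ^ k * (x i)^2)"
    proof (rule sum.cong[OF refl])
      fix i assume "i \<in> ?S"
      have "(\<Sum>j\<in>?S. x i * Pmat N k s i j * x j) = (\<Sum>j\<in>?S. if i = j then c ^ k * (x i)^2 else 0)"
        by (rule sum.cong[OF refl]) (auto simp: Pmat_def P power2_eq_square)
      also have "\<dots> = c ^ k * (x i)^2" using fin \<open>i \<in> ?S\<close> by simp
      finally show "(\<Sum>j\<in>?S. x i * Pmat N k s i j * x j) = c ^ k * (x i)^2" .
    qed
    also have "(\<Sum>i\<in>?S. \<Sum>j\<in>?S. x i * Gamma N k s i j * x j) = Bil {1..k} {1..N} s x x"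
      by (simp add: Bil_def G)
    finally have e: "(\<Sum>i\<in>?S. \<Sum>j\<in>?S. x i * (Gamma N k s i j - Pmat N k s i j) * x j)
       = Bil {1..k} {1..N} s x x - c ^ k * (\<Sum>i\<in>?S. (x i)^2)"
      by (simp add: sum_distrib_left)
    show "0 \<le> (\<Sum>i\<in>idx N k. \<Sum>j\<in>idx N k. x i * (Gamma N k s i j - Pmat N k s i j) * x j)"
      unfolding I e using M by simp
  qed
qed

end
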